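(* Let $\mu$ be a probability measure and let $(\mathcal E,\mathcal D(\mathcal E))$ be a non-conservative symmetric Dirichlet form on $L^2(\mu)$. Then $(\mathcal E,\mathcal D(\mathcal E))$ is irreducible if and only if there exists a function $\alpha:(0,\infty)\to(0,\infty)$ such that $$\mu(f^2)\le\alpha(r)\,\mathcal E(f,f)+r\|f\|_\infty^2,\qquad r>0,\ f\in\mathcal D(\mathcal E).$$ Consequently, for any symmetric (sub-)Markov semigroup $(P_t)_{t\ge0}$ on $L^2(\mu)$, one has $\lim_{t\to\infty}\|P_tf\|_{L^2(\mu)}=0$ for every $f\in L^2(\mu)$ if and only if $\lim_{t\to\infty}\|P_t\|_{\infty\to2}=0$, where $\|P_t\|_{\infty\to2}$ denotes the operator norm of $P_t$ from $L^\infty(\mu)$ to $L^2(\mu)$.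
   Context: Non-conservative means either $1\notin\mathcal D(\mathcal E)$, or $1\in\mathcal D(\mathcal E)$ but $\mathcal E(1,1)>0$. In this setting, irreducible means that $f\in\mathcal D(\mathcal E)$ with $\mathcal E(f,f)=0$ implies $f=0$. *)

theory Defs
  imports "HOL-Probability.Probability"
begin

text \<open>Elements of L^2(mu) are represented by real-valued measurable square-integrable
functions; all statements respect almost-everywhere equality.\<close>

definition L2 :: "'a measure \<Rightarrow> ('a \<Rightarrow> real) set" where
  "L2 M = {f. f \<in> borel_measurable M \<and> integrable M (\<lambda>x. (f x)^2)}"

definition l2norm :: "'a measure \<Rightarrow> ('a \<Rightarrow> real) \<Rightarrow> real" where
  "l2norm M f = sqrt (\<integral>x. (f x)^2 \<partial>M)"

definition linfnorm :: "'a measure \<Rightarrow> ('a \<Rightarrow> real) \<Rightarrow> ereal" where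
  "linfnorm M f = esssup M (\<lambda>x. ereal \<bar>f x\<bar>)"

definition E1 :: "'a measure \<Rightarrow> (('a \<Rightarrow> real) \<Rightarrow> ('a \<Rightarrow> real) \<Rightarrow> real) \<Rightarrow> ('a \<Rightarrow> real) \<Rightarrow> real" where
  "E1 M E h = E h h + (\<integral>x. (h x)^2 \<partial>M)"

text \<open>Symmetric Dirichlet form (E, D) on L^2(M): a densely defined, closed, nonnegative,
symmetric bilinear form with the Markov (unit contraction) property.\<close>
definition dirichlet_form ::
  "'a measure \<Rightarrow> ('a \<Rightarrow> real) set \<Rightarrow> (('a \<Rightarrow> real) \<Rightarrow> ('a \<Rightarrow> real) \<Rightarrow> real) \<Rightarrow> bool" where
  "dirichlet_form M D E \<longleftrightarrow>
     D \<subseteq> L2 M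
   \<and> (\<lambda>x. 0) \<in> D
   \<and> (\<forall>f\<in>D. \<forall>g\<in>D. (\<lambda>x. f x + g x) \<in> D)
   \<and> (\<forall>f\<in>D. \<forall>c::real. (\<lambda>x. c * f x) \<in> D)
   \<and> (\<forall>f\<in>D. \<forall>g. g \<in> borel_measurable M \<and> (AE x in M. f x = g x)
          \<longrightarrow> g \<in> D \<and> (\<forall>h\<in>D. E g h = E f h))
   \<and> (\<forall>f\<in>L2 M. \<forall>e>0. \<exists>g\<in>D. l2norm M (\<lambda>x. f x - g x) < e)
   \<and> (\<forall>f\<in>D. \<forall>g\<in>D. E f g = E g f)
   \<and> (\<forall>f\<in>D. \<forall>g\<in>D. \<forall>h\<in>D. E (\<lambda>x. f x + g x) h = E f h + E g h)
   \<and> (\<forall>f\<in>D. \<forall>g\<in>D. \<forall>c::real. E (\<lambda>x. c * f x) g = c * E f g)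
   \<and> (\<forall>f\<in>D. E f f \<ge> 0)
   \<and> (\<forall>u::nat \<Rightarrow> 'a \<Rightarrow> real. (\<forall>n. u n \<in> D) \<and>
          (\<forall>e>0. \<exists>N. \<forall>m\<ge>N. \<forall>n\<ge>N. E1 M E (\<lambda>x. u m x - u n x) < e)
        \<longrightarrow> (\<exists>f\<in>D. (\<lambda>n. E1 M E (\<lambda>x. u n x - f x)) \<longlonglongrightarrow> 0))
   \<and> (\<forall>f\<in>D. (\<lambda>x. min 1 (max 0 (f x))) \<in> D
          \<and> E (\<lambda>x. min 1 (max 0 (f x))) (\<lambda>x. min 1 (max 0 (f x))) \<le> E f f)"

definition non_conservative ::
  "'a measure \<Rightarrow> ('a \<Rightarrow> real) set \<Rightarrow> (('a \<Rightarrow> real) \<Rightarrow> ('a \<Rightarrow> real) \<Rightarrow> real) \<Rightarrow> bool" where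
  "non_conservative M D E \<longleftrightarrow>
     (\<lambda>x. 1) \<notin> D \<or> ((\<lambda>x. 1) \<in> D \<and> E (\<lambda>x. 1) (\<lambda>x. 1) > 0)"

definition irreducible_form ::
  "'a measure \<Rightarrow> ('a \<Rightarrow> real) set \<Rightarrow> (('a \<Rightarrow> real) \<Rightarrow> ('a \<Rightarrow> real) \<Rightarrow> real) \<Rightarrow> bool" where
  "irreducible_form M D E \<longleftrightarrow> (\<forall>f\<in>D. E f f = 0 \<longrightarrow> (AE x in M. f x = 0))"

definition symmetric_subMarkov_semigroup ::
  "'a measure \<Rightarrow> (real \<Rightarrow> ('a \<Rightarrow> real) \<Rightarrow> ('a \<Rightarrow> real)) \<Rightarrow> bool" where
  "symmetric_subMarkov_semigroup M P \<longleftrightarrow>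
     (\<forall>t\<ge>0. \<forall>f\<in>L2 M. P t f \<in> L2 M)
   \<and> (\<forall>t\<ge>0. \<forall>f\<in>L2 M. \<forall>g\<in>L2 M. AE x in M. P t (\<lambda>y. f y + g y) x = P t f x + P t g x)
   \<and> (\<forall>t\<ge>0. \<forall>f\<in>L2 M. \<forall>c::real. AE x in M. P t (\<lambda>y. c * f y) x = c * P t f x)
   \<and> (\<forall>t\<ge>0. \<forall>f\<in>L2 M. \<forall>g\<in>L2 M. (AE x in M. f x = g x) \<longrightarrow> (AE x in M. P t f x = P t g x))
   \<and> (\<forall>f\<in>L2 M. AE x in M. P 0 f x = f x)
   \<and> (\<forall>s\<ge>0. \<forall>t\<ge>0. \<forall>f\<in>L2 M. AE x in M. P (s + t) f x = P s (P t f) x)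
   \<and> (\<forall>t\<ge>0. \<forall>f\<in>L2 M. \<forall>g\<in>L2 M. (\<integral>x. P t f x * g x \<partial>M) = (\<integral>x. f x * P t g x \<partial>M))
   \<and> (\<forall>t\<ge>0. \<forall>f\<in>L2 M. (AE x in M. 0 \<le> f x \<and> f x \<le> 1)
          \<longrightarrow> (AE x in M. 0 \<le> P t f x \<and> P t f x \<le> 1))
   \<and> (\<forall>f\<in>L2 M. ((\<lambda>t. l2norm M (\<lambda>x. P t f x - f x)) \<longlongrightarrow> 0) (at_right 0))"

definition opnorm_inf2 :: "'a measure \<Rightarrow> (('a \<Rightarrow> real) \<Rightarrow> ('a \<Rightarrow> real)) \<Rightarrow> real" where
  "opnorm_inf2 M T = Sup {l2norm M (T f) | f. f \<in> borel_measurable M \<and> (AE x in M. \<bar>f x\<bar> \<le> 1)}"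

end

theory Submission
  imports Defs
begin

lemma L2_int:
  assumes "prob_space M" "f \<in> L2 M" shows "integrable M f"
proof -
  interpret prob_space M by fact
  have m: "f \<in> borel_measurable M" and i: "integrable M (\<lambda>x. (f x)^2)" using assms(2) by (auto simp: L2_def)
  have ii: "integrable M (\<lambda>x. (f x)^2 + 1)" using i by auto
  have "AE x in M. norm (f x) \<le> norm ((f x)^2 + 1)"
  proof (rule AE_I2)
    fix x
    have "\<bar>f x\<bar> \<le> (f x)^2 + 1"
    proof (cases "\<bar>f x\<bar> \<le> 1")
      case True then show ?thesis by (smt (verit) zero_le_power2)
    next
      case False then have "\<bar>f x\<bar> * 1 \<le> \<bar>f x\<bar> * \<bar>f x\<bar>" by (intro mult_left_mono) auto
      then show ?thesis by (simp add: power2_eq_square abs_mult_self_eq)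
    qed
    then show "norm (f x) \<le> norm ((f x)^2 + 1)" by simp
  qed
  from Bochner_Integration.integrable_bound[OF ii m this] show ?thesis .
qed

lemma L2_prod_int:
  assumes "f \<in> L2 M" "g \<in> L2 M" shows "integrable M (\<lambda>x. f x * g x)"
proof -
  have m: "f \<in> borel_measurable M" "g \<in> borel_measurable M"
   and i: "integrable M (\<lambda>x. (f x)^2)" "integrable M (\<lambda>x. (g x)^2)" using assms by (auto simp: L2_def)
  have ii: "integrable M (\<lambda>x. (f x)^2 + (g x)^2)" using i by auto
  have mm: "(\<lambda>x. f x * g x) \<in> borel_measurable M" using m by measurable
  have "AE x in M. norm (f x * g x) \<le> norm ((f x)\<^sup>2 + (g x)\<^sup>2)"
  proof (rule AE_I2)
    fix x
    have "2*\<bar>f x * g x\<bar> \<le> (f x)^2 + (g x)^2"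
      using sum_squares_bound[of "\<bar>f x\<bar>" "\<bar>g x\<bar>"] by (simp add: abs_mult)
    moreover have "0 \<le> (f x)^2 + (g x)^2" by simp
    ultimately show "norm (f x * g x) \<le> norm ((f x)\<^sup>2 + (g x)\<^sup>2)" by simp
  qed
  from Bochner_Integration.integrable_bound[OF ii mm this] show ?thesis .
qed

lemma bounded_L2:
  assumes "prob_space M" "f \<in> borel_measurable M" "AE x in M. \<bar>f x\<bar> \<le> K" shows "f \<in> L2 M"
proof -
  interpret prob_space M by fact
  have ii: "integrable M (\<lambda>x. K^2)" by simp
  have mm: "(\<lambda>x. (f x)^2) \<in> borel_measurable M" using assms(2) by measurable
  have "AE x in M. norm ((f x)^2) \<le> norm (K^2)"
    using assms(3)
  proof eventually_elim
    case (elim x)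
    then have "\<bar>f x\<bar> \<le> \<bar>K\<bar>" by linarith
    then show ?case by (simp add: abs_le_square_iff)
  qed
  from Bochner_Integration.integrable_bound[OF ii mm this] show ?thesis using assms by (auto simp: L2_def)
qed

lemma dfD1: assumes "dirichlet_form M D E" shows "D \<subseteq> L2 M"
proof -
  have "D \<subseteq> L2 M" using assms unfolding dirichlet_form_def by (elim conjE) assumption
  then show ?thesis by blast
qed

lemma dfD2: assumes "dirichlet_form M D E" "f\<in>D" "g\<in>D" shows "(\<lambda>x. f x + g x) \<in> D"
proof -
  have "\<forall>f\<in>D. \<forall>g\<in>D. (\<lambda>x. f x + g x) \<in> D" using assms unfolding dirichlet_form_def by (elim conjE) assumption
  then show ?thesis using assms(2-) by blast
qed

lemma dfD3: assumes "dirichlet_form M D E" "f\<in>D" shows "(\<lambda>x. c * f x) \<in> D"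
proof -
  have "\<forall>f\<in>D. \<forall>c::real. (\<lambda>x. c * f x) \<in> D" using assms unfolding dirichlet_form_def by (elim conjE) assumption
  then show ?thesis using assms(2-) by blast
qed

lemma dfD4: assumes "dirichlet_form M D E" "f\<in>D" "g \<in> borel_measurable M" "(AE x in M. f x = g x)" shows "g \<in> D"
proof -
  have "\<forall>f\<in>D. \<forall>g. g \<in> borel_measurable M \<and> (AE x in M. f x = g x) \<longrightarrow> g \<in> D \<and> (\<forall>h\<in>D. E g h = E f h)" using assms unfolding dirichlet_form_def by (elim conjE) assumption
  then show ?thesis using assms(2-) by blast
qed

lemma dfD5: assumes "dirichlet_form M D E" "f\<in>D" "g \<in> borel_measurable M" "(AE x in M. f x = g x)" "h \<in> D" shows "E g h = E f h"
proof -
  have "\<forall>f\<in>D. \<forall>g. g \<in> borel_measurable M \<and> (AE x in M. f x = g x) \<longrightarrow> g \<in> D \<and> (\<forall>h\<in>D. E g h = E f h)" using assms unfolding dirichlet_form_def by (elim conjE) assumption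
  then show ?thesis using assms(2-) by blast
qed

lemma dfD6: assumes "dirichlet_form M D E" "f\<in>D" "g\<in>D" shows "E f g = E g f"
proof -
  have "\<forall>f\<in>D. \<forall>g\<in>D. E f g = E g f" using assms unfolding dirichlet_form_def by (elim conjE) assumption
  then show ?thesis using assms(2-) by blast
qed

lemma dfD7: assumes "dirichlet_form M D E" "f\<in>D" "g\<in>D" "h\<in>D" shows "E (\<lambda>x. f x + g x) h = E f h + E g h"
proof -
  have "\<forall>f\<in>D. \<forall>g\<in>D. \<forall>h\<in>D. E (\<lambda>x. f x + g x) h = E f h + E g h" using assms unfolding dirichlet_form_def by (elim conjE) assumption
  then show ?thesis using assms(2-) by blast
qed

lemma dfD8: assumes "dirichlet_form M D E" "f\<in>D" "g\<in>D" shows "E (\<lambda>x. c * f x) g = c * E f g"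
proof -
  have "\<forall>f\<in>D. \<forall>g\<in>D. \<forall>c::real. E (\<lambda>x. c * f x) g = c * E f g" using assms unfolding dirichlet_form_def by (elim conjE) assumption
  then show ?thesis using assms(2-) by blast
qed

lemma dfD9: assumes "dirichlet_form M D E" "f\<in>D" shows "E f f \<ge> 0"
proof -
  have "\<forall>f\<in>D. E f f \<ge> 0" using assms unfolding dirichlet_form_def by (elim conjE) assumption
  then show ?thesis using assms(2-) by blast
qed

lemma dfD10: assumes "dirichlet_form M D E" "(\<forall>n. u n \<in> D)" "(\<forall>e>0. \<exists>N. \<forall>m\<ge>N. \<forall>n\<ge>N. E1 M E (\<lambda>x. u m x - u n x) < e)" shows "(\<exists>f\<in>D. (\<lambda>n. E1 M E (\<lambda>x. u n x - f x)) \<longlonglongrightarrow> 0)"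
proof -
  have "\<forall>u::nat \<Rightarrow> _ \<Rightarrow> real. (\<forall>n. u n \<in> D) \<and> (\<forall>e>0. \<exists>N. \<forall>m\<ge>N. \<forall>n\<ge>N. E1 M E (\<lambda>x. u m x - u n x) < e) \<longrightarrow> (\<exists>f\<in>D. (\<lambda>n. E1 M E (\<lambda>x. u n x - f x)) \<longlonglongrightarrow> 0)" using assms unfolding dirichlet_form_def by (elim conjE) assumption
  then show ?thesis using assms(2-) by blast
qed

lemma dfD11: assumes "dirichlet_form M D E" "f\<in>D" shows "(\<lambda>x. min 1 (max 0 (f x))) \<in> D"
proof -
  have "\<forall>f\<in>D. (\<lambda>x. min 1 (max 0 (f x))) \<in> D \<and> E (\<lambda>x. min 1 (max 0 (f x))) (\<lambda>x. min 1 (max 0 (f x))) \<le> E f f" using assms unfolding dirichlet_form_def by (elim conjE) assumption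
  then show ?thesis using assms(2-) by blast
qed

lemma dfD12: assumes "dirichlet_form M D E" "f\<in>D" shows "E (\<lambda>x. min 1 (max 0 (f x))) (\<lambda>x. min 1 (max 0 (f x))) \<le> E f f"
proof -
  have "\<forall>f\<in>D. (\<lambda>x. min 1 (max 0 (f x))) \<in> D \<and> E (\<lambda>x. min 1 (max 0 (f x))) (\<lambda>x. min 1 (max 0 (f x))) \<le> E f f" using assms unfolding dirichlet_form_def by (elim conjE) assumption
  then show ?thesis using assms(2-) by blast
qed

lemma df_comb_D:
  assumes "dirichlet_form M D E" "a\<in>D" "b\<in>D"
  shows "(\<lambda>t. x*a t + y*b t) \<in> D"
proof -
  have "(\<lambda>t. x*a t) \<in> D" "(\<lambda>t. y*b t) \<in> D" using dfD3[OF assms(1)] assms by auto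
  from dfD2[OF assms(1) this] show ?thesis .
qed

lemma df_comb_E:
  assumes df: "dirichlet_form M D E" and ab: "a\<in>D" "b\<in>D"
  shows "E (\<lambda>t. x*a t + y*b t) (\<lambda>t. x*a t + y*b t) = x^2*E a a + 2*x*y*E a b + y^2*E b b"
proof -
  define p where "p = (\<lambda>t. x*a t)"
  define q where "q = (\<lambda>t. y*b t)"
  have pq: "p \<in> D" "q \<in> D" using dfD3[OF df] ab by (auto simp: p_def q_def)
  have s: "(\<lambda>t. x*a t + y*b t) = (\<lambda>t. p t + q t)" by (simp add: p_def q_def)
  have sD: "(\<lambda>t. p t + q t) \<in> D" using dfD2[OF df pq] .
  have "E (\<lambda>t. p t + q t) (\<lambda>t. p t + q t) = E p (\<lambda>t. p t + q t) + E q (\<lambda>t. p t + q t)"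
    using dfD7[OF df pq sD] .
  also have "E p (\<lambda>t. p t + q t) = E p p + E q p"
    using dfD6[OF df pq(1) sD] dfD7[OF df pq pq(1)] by simp
  also have "E q (\<lambda>t. p t + q t) = E p q + E q q"
    using dfD6[OF df pq(2) sD] dfD7[OF df pq pq(2)] by simp
  also have "E p p = x*x*E a a"
    using dfD8[OF df ab(1) pq(1), of x] dfD6[OF df ab(1) pq(1)] dfD8[OF df ab(1) ab(1), of x]
    unfolding p_def by simp
  also have "E q q = y*y*E b b"
    using dfD8[OF df ab(2) pq(2), of y] dfD6[OF df ab(2) pq(2)] dfD8[OF df ab(2) ab(2), of y]
    unfolding q_def by simp
  also have "E q p = x*y*E a b"
    using dfD8[OF df ab(2) pq(1), of y] dfD6[OF df ab(2) pq(1)] dfD8[OF df ab(1) ab(2), of x]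
      dfD6[OF df ab]
    unfolding p_def q_def by simp
  also have "E p q = x*y*E a b"
    using dfD6[OF df pq] \<open>E q p = x*y*E a b\<close> by simp
  finally show ?thesis unfolding s by (simp add: power2_eq_square)
qed

lemma df_scale_E:
  assumes df: "dirichlet_form M D E" and a: "a\<in>D"
  shows "E (\<lambda>t. x*a t) (\<lambda>t. x*a t) = x^2*E a a"
proof -
  have pD: "(\<lambda>t. x*a t) \<in> D" using dfD3[OF df a] .
  show ?thesis
    using dfD8[OF df a pD, of x] dfD6[OF df a pD] dfD8[OF df a a, of x]
    by (simp add: power2_eq_square)
qed

lemma int_comb:
  assumes "a \<in> L2 M" "b \<in> L2 M"
  shows "(\<integral>t. (x*a t + y*b t)^2 \<partial>M) = x^2*(\<integral>t. (a t)^2 \<partial>M) + 2*x*y*(\<integral>t. a t * b t \<partial>M) + y^2*(\<integral>t. (b t)^2 \<partial>M)"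
proof -
  have i: "integrable M (\<lambda>t. (a t)^2)" "integrable M (\<lambda>t. (b t)^2)" using assms by (auto simp: L2_def)
  have iab: "integrable M (\<lambda>t. a t * b t)" using L2_prod_int[OF assms] .
  have "(\<lambda>t. (x*a t + y*b t)^2) = (\<lambda>t. x^2*(a t)^2 + 2*x*y*(a t * b t) + y^2*(b t)^2)"
    by (auto simp: power2_eq_square algebra_simps)
  then show ?thesis using i iab by simp
qed

lemma E1_comb:
  assumes df: "dirichlet_form M D E" and ab: "a\<in>D" "b\<in>D"
  shows "E1 M E (\<lambda>t. x*a t + y*b t) = x^2*E1 M E a + 2*x*y*(E a b + (\<integral>t. a t * b t \<partial>M)) + y^2*E1 M E b"
  using df_comb_E[OF assms, of x y] int_comb[of a M b x y] dfD1[OF df] ab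
  unfolding E1_def by (auto simp: algebra_simps)

lemma E1_nonneg: assumes df: "dirichlet_form M D E" and g: "g\<in>D" shows "0 \<le> E1 M E g"
  using dfD9[OF df g] unfolding E1_def by (simp add: integral_nonneg_AE)

lemma E_le_E1: assumes df: "dirichlet_form M D E" and g: "g\<in>D" shows "E g g \<le> E1 M E g"
  unfolding E1_def by (simp add: integral_nonneg_AE)

lemma int_le_E1: assumes df: "dirichlet_form M D E" and g: "g\<in>D" shows "(\<integral>x. (g x)^2 \<partial>M) \<le> E1 M E g"
  using dfD9[OF df g] unfolding E1_def by simp

lemma diff_comb: "(\<lambda>x. a x - b x) = (\<lambda>t. 1*a t + (-1)*b t)" for a b :: "_ \<Rightarrow> real"
  by (rule ext) simp

lemma parallelogram:
  assumes df: "dirichlet_form M D E" and ab: "a\<in>D" "b\<in>D"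
  shows "E1 M E (\<lambda>x. a x - b x) + 4 * E1 M E (\<lambda>t. (1/2)*a t + (1/2)*b t) = 2*E1 M E a + 2*E1 M E b"
  unfolding diff_comb E1_comb[OF df ab] by (simp add: power2_eq_square algebra_simps)

lemma cross_le:
  assumes df: "dirichlet_form M D E" and ab: "a\<in>D" "b\<in>D"
  shows "2 * E a b \<le> E a a + E b b"
proof -
  have "0 \<le> E (\<lambda>t. 1*a t + (-1)*b t) (\<lambda>t. 1*a t + (-1)*b t)"
    using dfD9[OF df df_comb_D[OF df ab]] .
  then show ?thesis unfolding df_comb_E[OF df ab] by simp
qed

lemma cross_ge:
  assumes df: "dirichlet_form M D E" and ab: "a\<in>D" "b\<in>D"
  shows "- 2 * E a b \<le> E a a + E b b"
proof -
  have "0 \<le> E (\<lambda>t. 1*a t + 1*b t) (\<lambda>t. 1*a t + 1*b t)"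
    using dfD9[OF df df_comb_D[OF df ab]] .
  then show ?thesis unfolding df_comb_E[OF df ab] by simp
qed

lemma int_cross_le:
  assumes "a \<in> L2 M" "b \<in> L2 M"
  shows "2 * (\<integral>t. a t * b t \<partial>M) \<le> (\<integral>t. (a t)^2 \<partial>M) + (\<integral>t. (b t)^2 \<partial>M)"
proof -
  have "0 \<le> (\<integral>t. (1*a t + (-1)*b t)^2 \<partial>M)" by (simp add: integral_nonneg_AE)
  then show ?thesis unfolding int_comb[OF assms] by simp
qed

lemma mid_E: assumes df: "dirichlet_form M D E" and ab: "a\<in>D" "b\<in>D"
  shows "E (\<lambda>t. (1/2)*a t + (1/2)*b t) (\<lambda>t. (1/2)*a t + (1/2)*b t) \<le> (E a a + E b b)/2"
  unfolding df_comb_E[OF df ab] using cross_le[OF df ab] by (simp add: power2_eq_square)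

lemma mid_E1: assumes df: "dirichlet_form M D E" and ab: "a\<in>D" "b\<in>D"
  shows "E1 M E (\<lambda>t. (1/2)*a t + (1/2)*b t) \<le> (E1 M E a + E1 M E b)/2"
proof -
  have L: "a \<in> L2 M" "b \<in> L2 M" using dfD1[OF df] ab by auto
  show ?thesis
    unfolding E1_comb[OF df ab] using cross_le[OF df ab] int_cross_le[OF L]
    unfolding E1_def by (simp add: power2_eq_square field_simps)
qed

lemma mid_int: assumes P: "prob_space M" and df: "dirichlet_form M D E" and ab: "a\<in>D" "b\<in>D"
  shows "(\<integral>t. (1/2)*a t + (1/2)*b t \<partial>M) = ((\<integral>t. a t \<partial>M) + (\<integral>t. b t \<partial>M))/2"
proof -
  have "integrable M a" "integrable M b" using L2_int[OF P] dfD1[OF df] ab by auto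
  then show ?thesis by simp
qed

lemma minim:
  assumes P: "prob_space M" and df: "dirichlet_form M D E" and c: "c > 0"
    and ex: "\<forall>n::nat. \<exists>g\<in>D. c \<le> (\<integral>x. g x \<partial>M) \<and> E g g \<le> 1/(real n+1) \<and> E1 M E g \<le> 2"
  shows "\<exists>f\<in>D. E f f = 0 \<and> 0 < (\<integral>x. f x \<partial>M)"
proof -
  define A where "A n = {g\<in>D. c \<le> (\<integral>x. g x \<partial>M) \<and> E g g \<le> 1/(real n+1) \<and> E1 M E g \<le> 2}" for n :: nat
  have Ane: "A n \<noteq> {}" for n using ex unfolding A_def by blast
  have AD: "A n \<subseteq> D" for n unfolding A_def by blast
  have Amono: "A m \<subseteq> A n" if "n \<le> m" for n m
  proof -
    have "1/(real m+1) \<le> 1/(real n+1)" using that by (simp add: frac_le)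
    then show ?thesis unfolding A_def by auto
  qed
  have mid: "(\<lambda>t. (1/2)*a t + (1/2)*b t) \<in> A n" if "a \<in> A n" "b \<in> A n" for a b n
  proof -
    have ab: "a \<in> D" "b \<in> D" using that AD by auto
    have mD: "(\<lambda>t. (1/2)*a t + (1/2)*b t) \<in> D" using df_comb_D[OF df ab] .
    have aa: "c \<le> (\<integral>x. a x \<partial>M)" "E a a \<le> 1/(real n+1)" "E1 M E a \<le> 2"
      and bb: "c \<le> (\<integral>x. b x \<partial>M)" "E b b \<le> 1/(real n+1)" "E1 M E b \<le> 2"
      using that unfolding A_def by auto
    have "c \<le> (\<integral>t. (1/2)*a t + (1/2)*b t \<partial>M)" proof -
      have "c + c \<le> (\<integral>x. a x \<partial>M) + (\<integral>x. b x \<partial>M)" using aa(1) bb(1) by (rule add_mono)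
      then show ?thesis by (subst mid_int[OF P df ab]) simp
    qed
    moreover have "E (\<lambda>t. (1/2)*a t + (1/2)*b t) (\<lambda>t. (1/2)*a t + (1/2)*b t) \<le> 1/(real n+1)"
    proof -
      have "E a a + E b b \<le> 1/(real n+1) + 1/(real n+1)" using aa(2) bb(2) by (rule add_mono)
      then show ?thesis using mid_E[OF df ab] by simp
    qed
    moreover have "E1 M E (\<lambda>t. (1/2)*a t + (1/2)*b t) \<le> 2"
    proof -
      have "E1 M E a + E1 M E b \<le> 2 + 2" using aa(3) bb(3) by (rule add_mono)
      then show ?thesis using mid_E1[OF df ab] by simp
    qed
    ultimately show ?thesis using mD unfolding A_def by blast
  qed
  define d where "d n = Inf (E1 M E ` A n)" for n
  have bdd: "bdd_below (E1 M E ` A n)" for n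
    using E1_nonneg[OF df] AD by (auto intro!: bdd_belowI[of _ 0])
  have d_le: "d n \<le> E1 M E g" if "g \<in> A n" for g n
    unfolding d_def using bdd that by (auto intro: cInf_lower)
  have d_2: "d n \<le> 2" for n
  proof -
    obtain g where "g \<in> A n" using Ane by blast
    then show ?thesis using d_le[of g n] unfolding A_def by auto
  qed
  have d_mono: "incseq d"
    unfolding incseq_def d_def
  proof (intro allI impI)
    fix m n :: nat assume "m \<le> n"
    show "Inf (E1 M E ` A m) \<le> Inf (E1 M E ` A n)"
    proof (rule cInf_superset_mono)
      show "E1 M E ` A n \<noteq> {}" using Ane[of n] by simp
      show "bdd_below (E1 M E ` A m)" by (rule bdd)
      show "E1 M E ` A n \<subseteq> E1 M E ` A m" using Amono[OF \<open>m \<le> n\<close>] by (rule image_mono)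
    qed
  qed
  have "\<forall>n. \<exists>g\<in>A n. E1 M E g < d n + 1/(real n+1)"
  proof
    fix n
    have "Inf (E1 M E ` A n) < d n + 1/(real n+1)" unfolding d_def by simp
    from cInf_lessD[OF _ this] Ane show "\<exists>g\<in>A n. E1 M E g < d n + 1/(real n+1)" by auto
  qed
  then obtain h where h: "\<And>n. h n \<in> A n" "\<And>n. E1 M E (h n) < d n + 1/(real n+1)"
    by metis
  have hD: "h n \<in> D" for n using h AD by blast
  define L where "L = (SUP n. d n)"
  have dL: "d \<longlonglongrightarrow> L" unfolding L_def
    by (rule LIMSEQ_incseq_SUP[OF _ d_mono]) (use d_2 in \<open>auto intro!: bdd_aboveI\<close>)
  have dleL: "d n \<le> L" for n using incseq_le[OF d_mono dL] .
  have bound: "E1 M E (\<lambda>x. h j x - h k x) < 2*(d j - d k) + 2/(real j+1) + 2/(real k+1)"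
    if "k \<le> j" for j k
  proof -
    have "h j \<in> A k" using h(1) Amono[OF that] by blast
    then have "(\<lambda>t. (1/2)*h j t + (1/2)*h k t) \<in> A k" using mid h(1) by blast
    then have "d k \<le> E1 M E (\<lambda>t. (1/2)*h j t + (1/2)*h k t)" by (rule d_le)
    then show ?thesis using parallelogram[OF df hD hD, of j k] h(2)[of j] h(2)[of k] by simp
  qed
  have cauchy: "\<forall>e>0. \<exists>N. \<forall>m\<ge>N. \<forall>n\<ge>N. E1 M E (\<lambda>x. h m x - h n x) < e"
  proof (intro allI impI)
    fix e :: real assume e: "e > 0"
    have "e/4 > 0" using e by simp
    with dL have "\<forall>\<^sub>F n in sequentially. dist (d n) L < e/4"
      unfolding tendsto_iff by blast
    then obtain N1 where N1: "\<And>n. n \<ge> N1 \<Longrightarrow> dist (d n) L < e/4" 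
      unfolding eventually_sequentially by blast
    obtain N2 :: nat where N2: "8/e < real N2" using reals_Archimedean2 by blast
    define N where "N = max N1 N2"
    have smallN: "2/(real n+1) < e/4" if "n \<ge> N" for n
    proof -
      have "8/e < real n + 1" using N2 that unfolding N_def by linarith
      then have "8 < e * (real n + 1)" using e by (simp add: field_simps)
      then show ?thesis using e by (simp add: field_simps)
    qed
    have dN: "L - d n < e/4" if "n \<ge> N" for n
      using N1[of n] that dleL[of n] unfolding N_def dist_real_def by auto
    have key: "E1 M E (\<lambda>x. h j x - h k x) < e" if "k \<le> j" "k \<ge> N" for j k
    proof -
      have jN: "j \<ge> N" using that by auto
      show ?thesis using bound[OF that(1)] smallN[OF jN] smallN[OF that(2)] dN[OF that(2)] dleL[of j]
        by argo
    qed
    have sym: "E1 M E (\<lambda>x. h j x - h k x) = E1 M E (\<lambda>x. h k x - h j x)" for j k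
      unfolding diff_comb E1_comb[OF df hD hD] by (simp add: dfD6[OF df hD hD] algebra_simps)
    show "\<exists>N. \<forall>m\<ge>N. \<forall>n\<ge>N. E1 M E (\<lambda>x. h m x - h n x) < e"
    proof (intro exI allI impI)
      fix m n assume "N \<le> m" "N \<le> n"
      then show "E1 M E (\<lambda>x. h m x - h n x) < e"
        using key[of n m] key[of m n] sym[of m n] by (cases "n \<le> m") auto
    qed
  qed
  obtain f where fD: "f \<in> D" and conv: "(\<lambda>n. E1 M E (\<lambda>x. h n x - f x)) \<longlonglongrightarrow> 0"
    using dfD10[OF df _ cauchy] hD by blast
  define w where "w n = (\<lambda>x. h n x - f x)" for n
  have wD: "w n \<in> D" for n unfolding w_def diff_comb by (rule df_comb_D[OF df hD fD])
  have fw: "f = (\<lambda>t. 1*h n t + (-1)*w n t)" for n unfolding w_def by auto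
  have Ef: "E f f \<le> 2/(real n+1) + 2*E1 M E (w n)" for n
  proof -
    have e1: "E (\<lambda>t. 1*h n t + (-1)*w n t) (\<lambda>t. 1*h n t + (-1)*w n t)
       = 1^2*E (h n) (h n) + 2*1*(-1)*E (h n) (w n) + (-1)^2*E (w n) (w n)"
      by (rule df_comb_E[OF df hD wD])
    have "E f f = E (h n) (h n) - 2*E (h n) (w n) + E (w n) (w n)"
      using e1 unfolding fw[of n, symmetric] by simp
    also have "\<dots> \<le> 2*E (h n) (h n) + 2*E (w n) (w n)"
      using cross_ge[OF df hD wD, of n n] by simp
    also have "\<dots> \<le> 2/(real n+1) + 2*E1 M E (w n)"
      using h(1)[of n] E_le_E1[OF df wD, of n] unfolding A_def by auto
    finally show ?thesis .
  qed
  have lim0: "(\<lambda>n. 2/(real n+1) + 2*E1 M E (w n)) \<longlonglongrightarrow> 0"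
  proof -
    have "(\<lambda>n. 2 * inverse (real (Suc n)) + 2*E1 M E (w n)) \<longlonglongrightarrow> 2*0 + 2*0"
      using conv unfolding w_def by (intro tendsto_intros LIMSEQ_inverse_real_of_nat)
    then show ?thesis by (simp add: divide_inverse add.commute)
  qed
  have "E f f \<le> 0" using LIMSEQ_le_const[OF lim0] Ef by blast
  then have Ef0: "E f f = 0" using dfD9[OF df fD] by simp
  from conv have "\<forall>\<^sub>F n in sequentially. E1 M E (w n) < c^2/4"
    unfolding w_def using c by (auto simp: tendsto_iff dist_real_def elim!: eventually_mono
      dest!: spec[of _ "c^2/4"])
  then obtain n where n: "E1 M E (w n) < c^2/4" unfolding eventually_sequentially by blast
  interpret prob_space M by fact
  have iw: "integrable M (w n)" "integrable M (h n)" "integrable M f"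
    using L2_int[OF P] dfD1[OF df] wD hD fD by auto
  have iw2: "integrable M (\<lambda>x. (w n x)^2)" using dfD1[OF df] wD by (auto simp: L2_def)
  have "(\<integral>x. w n x \<partial>M) \<le> (\<integral>x. (w n x)^2 / c + c/4 \<partial>M)"
  proof (rule integral_mono)
    show "integrable M (\<lambda>x. (w n x)^2 / c + c/4)" using iw2 by auto
    fix x
    have "0 \<le> (w n x - c/2)^2 / c" using c by simp
    also have "(w n x - c/2)^2 / c = (w n x)^2 / c + c/4 - w n x"
      using c by (simp add: power2_eq_square field_simps)
    finally show "w n x \<le> (w n x)^2 / c + c/4" by simp
  qed (use iw in auto)
  also have "\<dots> = (\<integral>x. (w n x)^2 \<partial>M) / c + c/4" using iw2 prob_space by simp
  also have "\<dots> \<le> (c^2/4)/c + c/4"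
    using int_le_E1[OF df wD, of n] n c by (intro add_mono divide_right_mono) auto
  also have "\<dots> = c/2" using c by (simp add: power2_eq_square field_simps)
  finally have wsmall: "(\<integral>x. w n x \<partial>M) \<le> c/2" .
  have "(\<integral>x. f x \<partial>M) = (\<integral>x. h n x \<partial>M) - (\<integral>x. w n x \<partial>M)"
    using iw unfolding w_def by simp
  moreover have "c \<le> (\<integral>x. h n x \<partial>M)" using h(1)[of n] unfolding A_def by auto
  ultimately have "0 < (\<integral>x. f x \<partial>M)" using wsmall c by linarith
  then show ?thesis using fD Ef0 by blast
qed

lemma lin_AE: "AE x in M. ereal \<bar>f x\<bar> \<le> linfnorm M f"
  unfolding linfnorm_def by (rule esssup_AE)

lemma lin_nonneg: assumes P: "prob_space M" shows "0 \<le> linfnorm M f"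
proof -
  interpret prob_space M by fact
  have "AE x in M. 0 \<le> linfnorm M f"
    using lin_AE[where M=M and f=f]
  proof eventually_elim
    case (elim x)
    have "0 \<le> ereal \<bar>f x\<bar>" by simp
    then show ?case using elim by (rule order_trans)
  qed
  then show ?thesis by simp
qed

lemma lin_le1: assumes "f \<in> borel_measurable M" "\<And>x. \<bar>f x\<bar> \<le> 1" shows "linfnorm M f \<le> 1"
  unfolding linfnorm_def using assms by (intro esssup_I) auto

lemma lin_finite:
  assumes P: "prob_space M" and fin: "linfnorm M f \<noteq> \<infinity>"
  obtains L where "linfnorm M f = ereal L" "0 \<le> L" "AE x in M. \<bar>f x\<bar> \<le> L"
proof -
  have nn: "0 \<le> linfnorm M f" by (rule lin_nonneg[OF P])
  then obtain L where L: "linfnorm M f = ereal L" using fin by (cases "linfnorm M f") auto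
  have "AE x in M. \<bar>f x\<bar> \<le> L" using lin_AE[where M=M and f=f] unfolding L by auto
  then show ?thesis using that L nn by auto
qed

lemma trunc_zero:
  assumes P: "prob_space M" and df: "dirichlet_form M D E" and fD: "f \<in> D" and E0: "E f f = 0"
    and hyp: "\<forall>r>0. \<forall>f\<in>D. ereal (\<integral>x. (f x)^2 \<partial>M)
                     \<le> ereal (\<alpha> r * E f f) + ereal r * (linfnorm M f)^2"
  shows "AE x in M. f x \<le> 0"
proof -
  interpret prob_space M by fact
  define g where "g = (\<lambda>x. min 1 (max 0 (f x)))"
  have gD: "g \<in> D" unfolding g_def using dfD11[OF df fD] .
  have "E g g \<le> 0" unfolding g_def using dfD12[OF df fD] E0 by simp
  then have Eg: "E g g = 0" using dfD9[OF df gD] by simp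
  have gm: "g \<in> borel_measurable M" using dfD1[OF df] gD by (auto simp: L2_def)
  have gb: "\<bar>g x\<bar> \<le> 1" for x unfolding g_def by auto
  have l1: "linfnorm M g \<le> 1" using lin_le1[OF gm gb] .
  have "linfnorm M g \<noteq> \<infinity>" using l1 by auto
  then obtain l where l: "linfnorm M g = ereal l" "0 \<le> l"
    using lin_finite[OF P, of g] by blast
  have l1': "l \<le> 1" using l1 l by simp
  have gi: "integrable M (\<lambda>x. (g x)^2)" using dfD1[OF df] gD by (auto simp: L2_def)
  have le: "(\<integral>x. (g x)^2 \<partial>M) \<le> r * l^2" if "r > 0" for r
    using hyp[rule_format, OF that gD] unfolding Eg l by simp
  have zero: "(\<integral>x. (g x)^2 \<partial>M) = 0"
  proof (rule ccontr)
    assume "(\<integral>x. (g x)^2 \<partial>M) \<noteq> 0"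
    moreover have "0 \<le> (\<integral>x. (g x)^2 \<partial>M)" by (simp add: integral_nonneg_AE)
    ultimately have pos: "0 < (\<integral>x. (g x)^2 \<partial>M)" by linarith
    have "l^2 \<le> 1" using l(2) l1' by (simp add: power_le_one)
    then have "(\<integral>x. (g x)^2 \<partial>M)/2 * l^2 \<le> (\<integral>x. (g x)^2 \<partial>M)/2"
      using pos by (simp add: mult_left_le)
    with le[of "(\<integral>x. (g x)^2 \<partial>M)/2"] pos show False by argo
  qed
  then have "AE x in M. (g x)^2 = 0"
    using integral_nonneg_eq_0_iff_AE[OF gi] by simp
  then show ?thesis unfolding g_def
  proof eventually_elim
    case (elim x)
    then have "min 1 (max 0 (f x)) = (0::real)" by simp
    then show ?case by (cases "f x \<le> 0"; cases "1 \<le> f x") (auto simp: min_def max_def)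
  qed
qed

lemma part1_back:
  assumes P: "prob_space M" and df: "dirichlet_form M D E"
    and hyp: "\<forall>r>0. \<forall>f\<in>D. ereal (\<integral>x. (f x)^2 \<partial>M)
                     \<le> ereal (\<alpha> r * E f f) + ereal r * (linfnorm M f)^2"
  shows "irreducible_form M D E"
  unfolding irreducible_form_def
proof (intro ballI impI)
  fix f assume fD: "f \<in> D" and E0: "E f f = 0"
  define v where "v = (\<lambda>x. (-1) * f x)"
  have vD: "v \<in> D" unfolding v_def using dfD3[OF df fD] .
  have "E v v = 0" unfolding v_def df_scale_E[OF df fD] E0 by simp
  have "AE x in M. f x \<le> 0" by (rule trunc_zero[OF P df fD E0 hyp])
  moreover have "AE x in M. v x \<le> 0" by (rule trunc_zero[OF P df vD \<open>E v v = 0\<close> hyp])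
  ultimately show "AE x in M. f x = 0" unfolding v_def by eventually_elim auto
qed

lemma violation_to_g:
  assumes P: "prob_space M" and df: "dirichlet_form M D E" and r: "r > 0" and a: "a \<ge> 1"
    and fD: "f \<in> D"
    and viol: "ereal (\<integral>x. (f x)^2 \<partial>M) > ereal (a * E f f) + ereal r * (linfnorm M f)^2"
  shows "\<exists>g\<in>D. r/2 \<le> (\<integral>x. g x \<partial>M) \<and> E g g \<le> 1/a \<and> E1 M E g \<le> 2"
proof -
  interpret prob_space M by fact
  have Ef: "0 \<le> E f f" using dfD9[OF df fD] .
  have fin: "linfnorm M f \<noteq> \<infinity>"
  proof
    assume inf: "linfnorm M f = \<infinity>"
    have "ereal r * \<infinity> = \<infinity>" using r by simp
    then have "ereal (a * E f f) + ereal r * (linfnorm M f)^2 = \<infinity>" unfolding inf by simp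
    from viol[unfolded this] show False by simp
  qed
  obtain L where L: "linfnorm M f = ereal L" "0 \<le> L" and Lae: "AE x in M. \<bar>f x\<bar> \<le> L"
    using lin_finite[OF P fin] by blast
  have viol': "a * E f f + r * L^2 < (\<integral>x. (f x)^2 \<partial>M)" using viol unfolding L by simp
  have fm: "f \<in> borel_measurable M" using dfD1[OF df] fD by (auto simp: L2_def)
  have Lpos: "L > 0"
  proof (rule ccontr)
    assume "\<not> L > 0"
    then have "L = 0" using L by simp
    then have "AE x in M. (f x)^2 = 0" using Lae by auto
    then have "(\<integral>x. (f x)^2 \<partial>M) = 0" by (rule integral_eq_zero_AE)
    moreover have "0 \<le> a * E f f" using Ef a by simp
    ultimately show False using viol' \<open>L = 0\<close> by simp
  qed
  define u where "u = (\<lambda>x. (1/L) * f x)"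
  have uD: "u \<in> D" unfolding u_def by (rule dfD3[OF df fD])
  have Eu: "E u u = (1/L)^2 * E f f" unfolding u_def by (rule df_scale_E[OF df fD])
  have fi2: "integrable M (\<lambda>x. (f x)^2)" using dfD1[OF df] fD by (auto simp: L2_def)
  have iu: "(\<integral>x. (u x)^2 \<partial>M) = (1/L)^2 * (\<integral>x. (f x)^2 \<partial>M)"
    unfolding u_def power_mult_distrib by simp
  have uae: "AE x in M. \<bar>u x\<bar> \<le> 1" using Lae unfolding u_def
  proof eventually_elim
    case (elim x)
    have "\<bar>1/L * f x\<bar> = \<bar>f x\<bar> / L" using Lpos by (simp add: abs_mult)
    also have "\<dots> \<le> 1" using elim Lpos by simp
    finally show ?case .
  qed
  have um[measurable]: "u \<in> borel_measurable M" using dfD1[OF df] uD by (auto simp: L2_def)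
  have ui2: "integrable M (\<lambda>x. (u x)^2)" using dfD1[OF df] uD by (auto simp: L2_def)
  have viol_u: "a * E u u + r < (\<integral>x. (u x)^2 \<partial>M)"
  proof -
    have "(1/L)^2 * (a * E f f + r * L^2) < (1/L)^2 * (\<integral>x. (f x)^2 \<partial>M)"
      using viol' Lpos by (intro mult_strict_left_mono) auto
    then show ?thesis unfolding iu Eu using Lpos by (simp add: field_simps power2_eq_square)
  qed
  have u_le1: "(\<integral>x. (u x)^2 \<partial>M) \<le> 1"
  proof -
    have "(\<integral>x. (u x)^2 \<partial>M) \<le> (\<integral>x. 1 \<partial>M)"
    proof (rule integral_mono_AE[OF ui2])
      show "integrable M (\<lambda>x. 1::real)" by simp
      show "AE x in M. (u x)^2 \<le> 1" using uae
      proof eventually_elim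
        case (elim x)
        then show ?case by (simp add: abs_square_le_1)
      qed
    qed
    then show ?thesis using prob_space by simp
  qed
  have Eu_le: "E u u \<le> 1/a"
  proof -
    have "a * E u u \<le> 1" using viol_u u_le1 r by argo
    then show ?thesis using a by (simp add: field_simps)
  qed
  define v where "v = (\<lambda>x. (-1) * u x)"
  have vD: "v \<in> D" unfolding v_def by (rule dfD3[OF df uD])
  have Ev: "E v v = E u u" unfolding v_def df_scale_E[OF df uD] by simp
  define g1 where "g1 = (\<lambda>x. min 1 (max 0 (u x)))"
  define g2 where "g2 = (\<lambda>x. min 1 (max 0 (v x)))"
  have g1D: "g1 \<in> D" unfolding g1_def by (rule dfD11[OF df uD])
  have g2D: "g2 \<in> D" unfolding g2_def by (rule dfD11[OF df vD])
  have Eg1: "E g1 g1 \<le> 1/a" unfolding g1_def using dfD12[OF df uD] Eu_le by (rule order_trans)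
  have "E g2 g2 \<le> E u u" unfolding g2_def using dfD12[OF df vD] unfolding Ev .
  then have Eg2: "E g2 g2 \<le> 1/a" using Eu_le by (rule order_trans)
  have g1m[measurable]: "g1 \<in> borel_measurable M" using dfD1[OF df] g1D by (auto simp: L2_def)
  have g2m[measurable]: "g2 \<in> borel_measurable M" using dfD1[OF df] g2D by (auto simp: L2_def)
  have g1b: "0 \<le> g1 x \<and> g1 x \<le> 1" for x unfolding g1_def by simp
  have g2b: "0 \<le> g2 x \<and> g2 x \<le> 1" for x unfolding g2_def by simp
  have g1L: "g1 \<in> L2 M" using dfD1[OF df] g1D by blast
  have g1i: "integrable M (\<lambda>x. (g1 x)^2)" "integrable M g1"
    using g1L L2_int[OF P g1L] by (simp_all add: L2_def)
  have g2L: "g2 \<in> L2 M" using dfD1[OF df] g2D by blast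
  have g2i: "integrable M (\<lambda>x. (g2 x)^2)" "integrable M g2"
    using g2L L2_int[OF P g2L] by (simp_all add: L2_def)
  have sq: "AE x in M. (g1 x)^2 + (g2 x)^2 = (u x)^2"
    using uae unfolding g1_def g2_def v_def
  proof eventually_elim
    case (elim x)
    have "-1 \<le> u x" "u x \<le> 1" using elim by auto
    then show ?case
    proof (cases "0 \<le> u x")
      case True
      then have "min 1 (max 0 (u x)) = u x" "min 1 (max 0 (-1 * u x)) = (0::real)" using \<open>u x \<le> 1\<close> by auto
      then show ?thesis by simp
    next
      case False
      then have "min 1 (max 0 (u x)) = (0::real)" "min 1 (max 0 (-1 * u x)) = - u x" using \<open>-1 \<le> u x\<close> by auto
      then show ?thesis by simp
    qed
  qed
  have "(\<integral>x. (g1 x)^2 \<partial>M) + (\<integral>x. (g2 x)^2 \<partial>M) = (\<integral>x. (g1 x)^2 + (g2 x)^2 \<partial>M)"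
    using g1i g2i by simp
  also have "\<dots> = (\<integral>x. (u x)^2 \<partial>M)"
  proof (rule integral_cong_AE)
    show "(\<lambda>x. (g1 x)^2 + (g2 x)^2) \<in> borel_measurable M" by measurable
    show "(\<lambda>x. (u x)^2) \<in> borel_measurable M" by measurable
  qed (rule sq)
  finally have eqs: "(\<integral>x. (g1 x)^2 \<partial>M) + (\<integral>x. (g2 x)^2 \<partial>M) = (\<integral>x. (u x)^2 \<partial>M)" .
  have "0 \<le> a * E u u" using a dfD9[OF df uD] by simp
  then have sum: "(\<integral>x. (g1 x)^2 \<partial>M) + (\<integral>x. (g2 x)^2 \<partial>M) > r"
    using eqs viol_u by argo
  have gsq: "(\<integral>x. (g x)^2 \<partial>M) \<le> (\<integral>x. g x \<partial>M)"
    if "integrable M g" "integrable M (\<lambda>x. (g x)^2)" "\<And>x. 0 \<le> g x \<and> g x \<le> 1" for g :: "_ \<Rightarrow> real"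
  proof (rule integral_mono[OF that(2,1)])
    fix x
    have "g x * g x \<le> g x * 1" using that(3)[of x] by (intro mult_left_mono) auto
    then show "(g x)^2 \<le> g x" by (simp add: power2_eq_square)
  qed
  have E1b: "E1 M E g \<le> 2" if "E g g \<le> 1/a" "integrable M (\<lambda>x. (g x)^2)" "\<And>x. 0 \<le> g x \<and> g x \<le> 1" for g :: "_ \<Rightarrow> real"
  proof -
    have "1/a \<le> 1" using a by simp
    have "(\<integral>x. (g x)^2 \<partial>M) \<le> (\<integral>x. 1 \<partial>M)"
    proof (rule integral_mono[OF that(2)])
      fix x
      have "g x * g x \<le> 1 * 1" using that(3)[of x] by (intro mult_mono) auto
      then show "(g x)^2 \<le> 1" by (simp add: power2_eq_square)
    qed simp
    then have "(\<integral>x. (g x)^2 \<partial>M) \<le> 1" using prob_space by simp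
    then show ?thesis unfolding E1_def using that(1) \<open>1/a \<le> 1\<close> by argo
  qed
  show ?thesis
  proof (cases "r/2 < (\<integral>x. (g1 x)^2 \<partial>M)")
    case True
    then have "r/2 \<le> (\<integral>x. g1 x \<partial>M)" using gsq[OF g1i(2,1) g1b] by argo
    then show ?thesis using g1D Eg1 E1b[OF Eg1 g1i(1) g1b] by blast
  next
    case False
    then have "r/2 < (\<integral>x. (g2 x)^2 \<partial>M)" using sum by argo
    then have "r/2 \<le> (\<integral>x. g2 x \<partial>M)" using gsq[OF g2i(2,1) g2b] by argo
    then show ?thesis using g2D Eg2 E1b[OF Eg2 g2i(1) g2b] by blast
  qed
qed

lemma part1_r:
  assumes P: "prob_space M" and df: "dirichlet_form M D E" and irr: "irreducible_form M D E"
    and r: "r > 0"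
  shows "\<exists>a\<ge>1. \<forall>f\<in>D. ereal (\<integral>x. (f x)^2 \<partial>M) \<le> ereal (a * E f f) + ereal r * (linfnorm M f)^2"
proof (rule ccontr)
  assume "\<not> ?thesis"
  then have viol: "\<forall>a\<ge>1. \<exists>f\<in>D. ereal (\<integral>x. (f x)^2 \<partial>M) > ereal (a * E f f) + ereal r * (linfnorm M f)^2"
    by (metis not_le not_less)
  have "\<forall>n::nat. \<exists>g\<in>D. r/2 \<le> (\<integral>x. g x \<partial>M) \<and> E g g \<le> 1/(real n+1) \<and> E1 M E g \<le> 2"
  proof
    fix n :: nat
    have a1: "real n + 1 \<ge> 1" by simp
    obtain f where fD: "f \<in> D" and v: "ereal (\<integral>x. (f x)^2 \<partial>M) > ereal ((real n + 1) * E f f) + ereal r * (linfnorm M f)^2"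
      using viol a1 by blast
    show "\<exists>g\<in>D. r/2 \<le> (\<integral>x. g x \<partial>M) \<and> E g g \<le> 1/(real n+1) \<and> E1 M E g \<le> 2"
      by (rule violation_to_g[OF P df r a1 fD v])
  qed
  from minim[OF P df _ this] r obtain f where fD: "f \<in> D" and Ef: "E f f = 0" and pos: "0 < (\<integral>x. f x \<partial>M)"
    by auto
  have "AE x in M. f x = 0" using irr fD Ef unfolding irreducible_form_def by blast
  then have "(\<integral>x. f x \<partial>M) = 0" by (rule integral_eq_zero_AE)
  then show False using pos by simp
qed

lemma part1_fwd:
  assumes P: "prob_space M" and df: "dirichlet_form M D E" and irr: "irreducible_form M D E"
  shows "\<exists>\<alpha>::real \<Rightarrow> real. (\<forall>r>0. \<alpha> r > 0) \<and>
                 (\<forall>r>0. \<forall>f\<in>D. ereal (\<integral>x. (f x)^2 \<partial>M)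
                     \<le> ereal (\<alpha> r * E f f) + ereal r * (linfnorm M f)^2)"
proof -
  define Q where "Q r a \<longleftrightarrow> a \<ge> 1 \<and> (\<forall>f\<in>D. ereal (\<integral>x. (f x)^2 \<partial>M) \<le> ereal (a * E f f) + ereal r * (linfnorm M f)^2)" for r a
  define \<alpha> where "\<alpha> r = (SOME a. Q r a)" for r
  have Qa: "Q r (\<alpha> r)" if "r > 0" for r
    unfolding \<alpha>_def by (rule someI_ex) (use part1_r[OF P df irr that] in \<open>auto simp: Q_def\<close>)
  show ?thesis
  proof (intro exI conjI allI impI)
    fix r :: real assume "r > 0"
    then show "\<alpha> r > 0" using Qa unfolding Q_def by fastforce
  next
    fix r :: real assume "r > 0"
    then show "\<forall>f\<in>D. ereal (\<integral>x. (f x)^2 \<partial>M) \<le> ereal (\<alpha> r * E f f) + ereal r * (linfnorm M f)^2"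
      using Qa unfolding Q_def by blast
  qed
qed

lemma L2_scale: assumes "f \<in> L2 M" shows "(\<lambda>x. a * f x) \<in> L2 M"
proof -
  have m: "f \<in> borel_measurable M" and i: "integrable M (\<lambda>x. (f x)^2)" using assms by (auto simp: L2_def)
  have "(\<lambda>x. (a * f x)^2) = (\<lambda>x. a^2 * (f x)^2)" by (simp add: power_mult_distrib)
  then have "integrable M (\<lambda>x. (a * f x)^2)" using i by simp
  moreover have "(\<lambda>x. a * f x) \<in> borel_measurable M" using m by measurable
  ultimately show ?thesis by (simp add: L2_def)
qed

lemma L2_add: assumes "f \<in> L2 M" "g \<in> L2 M" shows "(\<lambda>x. f x + g x) \<in> L2 M"
proof -
  have m: "f \<in> borel_measurable M" "g \<in> borel_measurable M"
    and i: "integrable M (\<lambda>x. (f x)^2)" "integrable M (\<lambda>x. (g x)^2)" using assms by (auto simp: L2_def)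
  have ii: "integrable M (\<lambda>x. 2*(f x)^2 + 2*(g x)^2)" using i by simp
  have mm: "(\<lambda>x. (f x + g x)^2) \<in> borel_measurable M" using m by measurable
  have "AE x in M. norm ((f x + g x)^2) \<le> norm (2*(f x)^2 + 2*(g x)^2)"
  proof (rule AE_I2)
    fix x
    have "(f x + g x)^2 \<le> 2*(f x)^2 + 2*(g x)^2"
      using sum_squares_bound[of "f x" "g x"] by (simp add: power2_eq_square algebra_simps)
    then show "norm ((f x + g x)^2) \<le> norm (2*(f x)^2 + 2*(g x)^2)" by simp
  qed
  from Bochner_Integration.integrable_bound[OF ii mm this]
  show ?thesis using m by (simp add: L2_def)
qed

lemma L2_comb: assumes "f \<in> L2 M" "g \<in> L2 M" shows "(\<lambda>x. a * f x + b * g x) \<in> L2 M"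
  using L2_add[OF L2_scale[OF assms(1)] L2_scale[OF assms(2)]] .

definition one :: "'a \<Rightarrow> real" where "one = (\<lambda>x. 1)"

lemma one_L2: "prob_space M \<Longrightarrow> one \<in> L2 M"
  unfolding one_def by (rule bounded_L2[where K=1]) auto

lemma sgD1: assumes sga: "symmetric_subMarkov_semigroup M P" and "t \<ge> 0" and "f \<in> L2 M"
  shows "P t f \<in> L2 M"
proof -
  have "\<forall>t\<ge>0. \<forall>f\<in>L2 M. P t f \<in> L2 M" using sga unfolding symmetric_subMarkov_semigroup_def by (elim conjE) assumption
  then show ?thesis using assms(2-) by blast
qed
lemma sgD2: assumes sga: "symmetric_subMarkov_semigroup M P" and "t \<ge> 0" and "f \<in> L2 M" and "g \<in> L2 M"
  shows "AE x in M. P t (\<lambda>y. f y + g y) x = P t f x + P t g x"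
proof -
  have "\<forall>t\<ge>0. \<forall>f\<in>L2 M. \<forall>g\<in>L2 M. AE x in M. P t (\<lambda>y. f y + g y) x = P t f x + P t g x" using sga unfolding symmetric_subMarkov_semigroup_def by (elim conjE) assumption
  then show ?thesis using assms(2-) by blast
qed
lemma sgD3: assumes sga: "symmetric_subMarkov_semigroup M P" and "t \<ge> 0" and "f \<in> L2 M"
  shows "AE x in M. P t (\<lambda>y. c * f y) x = c * P t f x"
proof -
  have "\<forall>t\<ge>0. \<forall>f\<in>L2 M. \<forall>c::real. AE x in M. P t (\<lambda>y. c * f y) x = c * P t f x" using sga unfolding symmetric_subMarkov_semigroup_def by (elim conjE) assumption
  then show ?thesis using assms(2-) by blast
qed
lemma sgD7: assumes sga: "symmetric_subMarkov_semigroup M P" and "t \<ge> 0" and "f \<in> L2 M" and "g \<in> L2 M"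
  shows "(\<integral>x. P t f x * g x \<partial>M) = (\<integral>x. f x * P t g x \<partial>M)"
proof -
  have "\<forall>t\<ge>0. \<forall>f\<in>L2 M. \<forall>g\<in>L2 M. (\<integral>x. P t f x * g x \<partial>M) = (\<integral>x. f x * P t g x \<partial>M)" using sga unfolding symmetric_subMarkov_semigroup_def by (elim conjE) assumption
  then show ?thesis using assms(2-) by blast
qed
lemma sgD8: assumes sga: "symmetric_subMarkov_semigroup M P" and "t \<ge> 0" and "f \<in> L2 M" and "(AE x in M. 0 \<le> f x \<and> f x \<le> 1)"
  shows "(AE x in M. 0 \<le> P t f x \<and> P t f x \<le> 1)"
proof -
  have "\<forall>t\<ge>0. \<forall>f\<in>L2 M. (AE x in M. 0 \<le> f x \<and> f x \<le> 1) \<longrightarrow> (AE x in M. 0 \<le> P t f x \<and> P t f x \<le> 1)" using sga unfolding symmetric_subMarkov_semigroup_def by (elim conjE) assumption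
  then show ?thesis using assms(2-) by blast
qed

lemma sg_lin:
  assumes sg: "symmetric_subMarkov_semigroup M P" and t: "t \<ge> 0" and fg: "f \<in> L2 M" "g \<in> L2 M"
  shows "AE x in M. P t (\<lambda>y. a * f y + b * g y) x = a * P t f x + b * P t g x"
proof -
  have p: "(\<lambda>y. a * f y) \<in> L2 M" "(\<lambda>y. b * g y) \<in> L2 M" using L2_scale fg by auto
  have "AE x in M. P t (\<lambda>y. (\<lambda>y. a * f y) y + (\<lambda>y. b * g y) y) x = P t (\<lambda>y. a * f y) x + P t (\<lambda>y. b * g y) x"
    by (rule sgD2[OF sg t p])
  moreover have "AE x in M. P t (\<lambda>y. a * f y) x = a * P t f x" by (rule sgD3[OF sg t fg(1)])
  moreover have "AE x in M. P t (\<lambda>y. b * g y) x = b * P t g x" by (rule sgD3[OF sg t fg(2)])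
  ultimately show ?thesis by eventually_elim simp
qed

lemma sg_pos:
  assumes P: "prob_space M" and sg: "symmetric_subMarkov_semigroup M P" and t: "t \<ge> 0"
    and hm: "h \<in> borel_measurable M" and K: "K > 0" and hb: "AE x in M. 0 \<le> h x \<and> h x \<le> K"
  shows "AE x in M. 0 \<le> P t h x"
proof -
  define h' where "h' = (\<lambda>x. (1/K) * h x)"
  have h'm: "h' \<in> borel_measurable M" unfolding h'_def using hm by measurable
  have h'b: "AE x in M. 0 \<le> h' x \<and> h' x \<le> 1" using hb unfolding h'_def
    by eventually_elim (use K in \<open>simp add: field_simps\<close>)
  have h'L: "h' \<in> L2 M"
    by (rule bounded_L2[OF P h'm, where K=1]) (use h'b in \<open>auto elim: eventually_mono\<close>)
  have eq: "(\<lambda>y. K * h' y) = h" unfolding h'_def using K by auto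
  have "AE x in M. 0 \<le> P t h' x \<and> P t h' x \<le> 1" by (rule sgD8[OF sg t h'L h'b])
  moreover have "AE x in M. P t h x = K * P t h' x" using sgD3[OF sg t h'L, of K] unfolding eq .
  ultimately show ?thesis by eventually_elim (use K in auto)
qed

lemma sg_mono:
  assumes P: "prob_space M" and sg: "symmetric_subMarkov_semigroup M P" and t: "t \<ge> 0"
    and fm: "f \<in> borel_measurable M" and gm: "g \<in> borel_measurable M" and K: "K > 0"
    and fb: "AE x in M. \<bar>f x\<bar> \<le> K" and gb: "AE x in M. \<bar>g x\<bar> \<le> K"
    and fg: "AE x in M. f x \<le> g x"
  shows "AE x in M. P t f x \<le> P t g x"
proof -
  have fL: "f \<in> L2 M" by (rule bounded_L2[OF P fm fb])
  have gL: "g \<in> L2 M" by (rule bounded_L2[OF P gm gb])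
  define h where "h = (\<lambda>y. 1 * g y + (-1) * f y)"
  have hm: "h \<in> borel_measurable M" unfolding h_def using fm gm by measurable
  have hb: "AE x in M. 0 \<le> h x \<and> h x \<le> 2*K" using fb gb fg unfolding h_def
    by eventually_elim auto
  have "AE x in M. 0 \<le> P t h x" by (rule sg_pos[OF P sg t hm _ hb]) (use K in simp)
  moreover have "AE x in M. P t h x = 1 * P t g x + (-1) * P t f x"
    unfolding h_def by (rule sg_lin[OF sg t gL fL])
  ultimately show ?thesis by eventually_elim simp
qed

lemma P1_bounds:
  assumes P: "prob_space M" and sg: "symmetric_subMarkov_semigroup M P" and t: "t \<ge> 0"
  shows "AE x in M. 0 \<le> P t one x \<and> P t one x \<le> 1"
  by (rule sgD8[OF sg t one_L2[OF P]]) (simp add: one_def)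

lemma sg_abs:
  assumes P: "prob_space M" and sg: "symmetric_subMarkov_semigroup M P" and t: "t \<ge> 0"
    and fm: "f \<in> borel_measurable M" and K: "K > 0" and fb: "AE x in M. \<bar>f x\<bar> \<le> K"
  shows "AE x in M. \<bar>P t f x\<bar> \<le> K * P t one x"
proof -
  have cm: "(\<lambda>y. c * one y) \<in> borel_measurable M" for c unfolding one_def by simp
  have cb: "AE x in M. \<bar>c * one x\<bar> \<le> K" if "\<bar>c\<bar> \<le> K" for c using that unfolding one_def by simp
  have "AE x in M. P t f x \<le> P t (\<lambda>y. K * one y) x"
    by (rule sg_mono[OF P sg t fm cm K fb cb]) (use fb K in \<open>auto simp: one_def elim: eventually_mono\<close>)
  moreover have "AE x in M. P t (\<lambda>y. (-K) * one y) x \<le> P t f x"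
    by (rule sg_mono[OF P sg t cm fm K cb fb]) (use fb K in \<open>auto simp: one_def elim: eventually_mono\<close>)
  moreover have "AE x in M. P t (\<lambda>y. K * one y) x = K * P t one x" by (rule sgD3[OF sg t one_L2[OF P]])
  moreover have "AE x in M. P t (\<lambda>y. (-K) * one y) x = (-K) * P t one x" by (rule sgD3[OF sg t one_L2[OF P]])
  ultimately show ?thesis by eventually_elim auto
qed

lemma sg_Linf:
  assumes P: "prob_space M" and sg: "symmetric_subMarkov_semigroup M P" and t: "t \<ge> 0"
    and fm: "f \<in> borel_measurable M" and K: "K > 0" and fb: "AE x in M. \<bar>f x\<bar> \<le> K"
  shows "(\<integral>x. (P t f x)^2 \<partial>M) \<le> K^2 * (\<integral>x. (P t one x)^2 \<partial>M)"
proof -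
  have fL: "f \<in> L2 M" by (rule bounded_L2[OF P fm fb])
  have i1: "integrable M (\<lambda>x. (P t f x)^2)" using sgD1[OF sg t fL] by (simp add: L2_def)
  have i2: "integrable M (\<lambda>x. (P t one x)^2)" using sgD1[OF sg t one_L2[OF P]] by (simp add: L2_def)
  have "(\<integral>x. (P t f x)^2 \<partial>M) \<le> (\<integral>x. K^2 * (P t one x)^2 \<partial>M)"
  proof (rule integral_mono_AE[OF i1])
    show "integrable M (\<lambda>x. K^2 * (P t one x)^2)" using i2 by simp
    show "AE x in M. (P t f x)^2 \<le> K^2 * (P t one x)^2"
      using sg_abs[OF P sg t fm K fb] P1_bounds[OF P sg t]
    proof eventually_elim
      case (elim x)
      then have "\<bar>P t f x\<bar> \<le> \<bar>K * P t one x\<bar>" using K by (simp add: abs_mult)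
      then have "(P t f x)^2 \<le> (K * P t one x)^2" by (simp add: abs_le_square_iff)
      then show ?case by (simp add: power_mult_distrib)
    qed
  qed
  then show ?thesis by simp
qed

lemma discr:
  fixes A B C :: real
  assumes C: "C \<ge> 0" and q: "\<And>q::rat. 0 \<le> A - 2 * of_rat q * B + (of_rat q)^2 * C"
  shows "B^2 \<le> A * C"
proof (rule ccontr)
  assume "\<not> B^2 \<le> A * C"
  then have neg: "A * C < B^2" by simp
  show False
  proof (cases "C = 0")
    case True
    then have "B \<noteq> 0" using neg by auto
    then have "B > 0 \<or> B < 0" by auto
    then show False
    proof
      assume Bp: "B > 0"
      obtain r :: rat where r: "A/(2*B) < of_rat r" "of_rat r < A/(2*B) + 1" using of_rat_dense[of "A/(2*B)" "A/(2*B)+1"] by auto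
      have "A < 2 * of_rat r * B" using r(1) Bp by (simp add: field_simps)
      then show False using q[of r] True by simp
    next
      assume Bn: "B < 0"
      obtain r :: rat where r: "A/(2*B) - 1 < of_rat r" "of_rat r < A/(2*B)" using of_rat_dense[of "A/(2*B) - 1" "A/(2*B)"] by auto
      have "A < 2 * of_rat r * B" using r(2) Bn by (simp add: field_simps)
      then show False using q[of r] True by simp
    qed
  next
    case False
    then have Cp: "C > 0" using C by simp
    define g where "g = B^2/C - A"
    have gp: "g > 0" unfolding g_def using neg Cp by (simp add: field_simps)
    define d where "d = min 1 (g/C)"
    have dp: "d > 0" unfolding d_def using gp Cp by simp
    obtain r :: rat where r: "B/C < of_rat r" "of_rat r < B/C + d" using of_rat_dense[of "B/C" "B/C + d"] dp by auto
    define e where "e = of_rat r - B/C"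
    have e: "0 < e" "e < d" using r unfolding e_def by auto
    have "e^2 < e * d" using e by (simp add: power2_eq_square)
    also have "\<dots> \<le> d * d" using e by (intro mult_right_mono) auto
    also have "\<dots> \<le> d * 1" using dp by (intro mult_left_mono) (auto simp: d_def)
    finally have "C * e^2 < C * d" using Cp by (simp add: mult_strict_left_mono)
    also have "C * d \<le> g" unfolding d_def using Cp gp by (simp add: min_def field_simps)
    finally have ce: "C * e^2 < g" .
    have "A - 2 * of_rat r * B + (of_rat r)^2 * C = C * e^2 + A - B^2/C"
      unfolding e_def using Cp by (simp add: field_simps power2_eq_square)
    also have "\<dots> < 0" using ce unfolding g_def by simp
    finally show False using q[of r] by simp
  qed
qed

lemma sg_contr_bdd:
  assumes P: "prob_space M" and sg: "symmetric_subMarkov_semigroup M P" and t: "t \<ge> 0"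
    and hm: "h \<in> borel_measurable M" and K: "K > 0" and hb: "AE x in M. \<bar>h x\<bar> \<le> K"
  shows "(\<integral>x. (P t h x)^2 \<partial>M) \<le> (\<integral>x. (h x)^2 \<partial>M)"
proof -
  interpret prob_space M by fact
  define h2 where "h2 = (\<lambda>x. (h x)^2)"
  have h2m: "h2 \<in> borel_measurable M" unfolding h2_def using hm by measurable
  have h2b: "AE x in M. \<bar>h2 x\<bar> \<le> K^2" using hb unfolding h2_def
    by eventually_elim (simp add: abs_le_square_iff[symmetric])
  have hL: "h \<in> L2 M" by (rule bounded_L2[OF P hm hb])
  have h2L: "h2 \<in> L2 M" by (rule bounded_L2[OF P h2m h2b])
  have oL: "one \<in> L2 M" by (rule one_L2[OF P])
  have quad: "AE x in M. 0 \<le> P t h2 x - 2 * of_rat q * P t h x + (of_rat q)^2 * P t one x" for q :: rat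
  proof -
    define l :: real where "l = of_rat q"
    define inner where "inner = (\<lambda>y. (-2*l) * h y + l^2 * one y)"
    have inL: "inner \<in> L2 M" unfolding inner_def by (rule L2_comb[OF hL oL])
    define gq where "gq = (\<lambda>y. 1 * h2 y + 1 * inner y)"
    have gq_eq: "gq y = (h y - l)^2" for y
      unfolding gq_def inner_def h2_def one_def by (simp add: power2_eq_square algebra_simps)
    have gqm: "gq \<in> borel_measurable M" unfolding gq_def inner_def h2_def one_def using hm by measurable
    have gqb: "AE x in M. 0 \<le> gq x \<and> gq x \<le> (K + \<bar>l\<bar>)^2 + 1" using hb
    proof eventually_elim
      case (elim x)
      have "\<bar>h x - l\<bar> \<le> K + \<bar>l\<bar>" using elim by linarith
      then have "(h x - l)^2 \<le> (K + \<bar>l\<bar>)^2" by (simp add: abs_le_square_iff[symmetric])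
      then show ?case unfolding gq_eq by simp
    qed
    have "AE x in M. 0 \<le> P t gq x"
      by (rule sg_pos[OF P sg t gqm _ gqb]) (simp add: add_nonneg_pos)
    moreover have "AE x in M. P t gq x = 1 * P t h2 x + 1 * P t inner x"
      unfolding gq_def by (rule sg_lin[OF sg t h2L inL])
    moreover have "AE x in M. P t inner x = (-2*l) * P t h x + l^2 * P t one x"
      unfolding inner_def by (rule sg_lin[OF sg t hL oL])
    ultimately show ?thesis unfolding l_def by eventually_elim simp
  qed
  then have "AE x in M. \<forall>q::rat. 0 \<le> P t h2 x - 2 * of_rat q * P t h x + (of_rat q)^2 * P t one x"
    by (simp add: AE_all_countable)
  moreover have "AE x in M. 0 \<le> P t one x \<and> P t one x \<le> 1" by (rule P1_bounds[OF P sg t])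
  moreover have "AE x in M. 0 \<le> P t h2 x"
  proof (rule sg_pos[OF P sg t h2m, of "K^2 + 1"])
    show "0 < K^2 + 1" by (simp add: add_nonneg_pos)
    show "AE x in M. 0 \<le> h2 x \<and> h2 x \<le> K^2 + 1" using h2b
      by eventually_elim (simp add: h2_def)
  qed
  ultimately have pt: "AE x in M. (P t h x)^2 \<le> P t h2 x * 1"
  proof eventually_elim
    case (elim x)
    have "(P t h x)^2 \<le> P t h2 x * P t one x" using discr[of "P t one x" "P t h2 x" "P t h x"] elim by auto
    also have "\<dots> \<le> P t h2 x * 1" using elim by (intro mult_left_mono) auto
    finally show ?case .
  qed
  have PhL: "P t h \<in> L2 M" by (rule sgD1[OF sg t hL])
  have Ph2L: "P t h2 \<in> L2 M" by (rule sgD1[OF sg t h2L])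
  have PoL: "P t one \<in> L2 M" by (rule sgD1[OF sg t oL])
  have i1: "integrable M (\<lambda>x. (P t h x)^2)" using PhL by (simp add: L2_def)
  have i2: "integrable M (\<lambda>x. P t h2 x * one x)" by (rule L2_prod_int[OF Ph2L oL])
  have i3: "integrable M (\<lambda>x. h2 x * P t one x)" by (rule L2_prod_int[OF h2L PoL])
  have i4: "integrable M h2" by (rule L2_int[OF P h2L])
  have "(\<integral>x. (P t h x)^2 \<partial>M) \<le> (\<integral>x. P t h2 x * one x \<partial>M)"
    using i1 i2 pt by (intro integral_mono_AE) (auto simp: one_def)
  also have "\<dots> = (\<integral>x. h2 x * P t one x \<partial>M)" by (rule sgD7[OF sg t h2L oL])
  also have "\<dots> \<le> (\<integral>x. h2 x \<partial>M)"
  proof (rule integral_mono_AE[OF i3 i4])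
    show "AE x in M. h2 x * P t one x \<le> h2 x" using P1_bounds[OF P sg t]
    proof eventually_elim
      case (elim x)
      have "0 \<le> h2 x" unfolding h2_def by simp
      then have "h2 x * P t one x \<le> h2 x * 1" using elim by (intro mult_left_mono) auto
      then show ?case by simp
    qed
  qed
  finally show ?thesis unfolding h2_def .
qed

definition clip :: "real \<Rightarrow> real \<Rightarrow> real" where "clip K y = max (-K) (min K y)"

lemma clip_bound: "K \<ge> 0 \<Longrightarrow> \<bar>clip K y\<bar> \<le> K" unfolding clip_def by auto
lemma clip_abs: "K \<ge> 0 \<Longrightarrow> \<bar>clip K y\<bar> \<le> \<bar>y\<bar>" unfolding clip_def by auto
lemma clip_id: "\<bar>y\<bar> \<le> K \<Longrightarrow> clip K y = y" unfolding clip_def by auto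
lemma clip_sq: "K \<ge> 0 \<Longrightarrow> (clip K y)^2 \<le> y * clip K y"
proof -
  assume K: "K \<ge> 0"
  consider "y \<ge> K" | "y \<le> -K" | "-K \<le> y \<and> y \<le> K" by linarith
  then show ?thesis
  proof cases
    case 1
    then have "clip K y = K" unfolding clip_def using K by auto
    moreover have "K * K \<le> y * K" using 1 K by (intro mult_right_mono) auto
    ultimately show ?thesis by (simp add: power2_eq_square)
  next
    case 2
    then have "clip K y = -K" unfolding clip_def using K by auto
    moreover have "K * K \<le> (-y) * K" using 2 K by (intro mult_right_mono) auto
    ultimately show ?thesis by (simp add: power2_eq_square)
  next
    case 3
    then have "clip K y = y" unfolding clip_def by auto
    then show ?thesis by (simp add: power2_eq_square)
  qed
qed
lemma clip_diff: "K \<ge> 0 \<Longrightarrow> \<bar>y - clip K y\<bar> \<le> \<bar>y\<bar>" unfolding clip_def by auto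

lemma clip_eventually: "\<forall>\<^sub>F n in sequentially. clip (real n + 1) y = y"
proof -
  obtain N :: nat where "\<bar>y\<bar> \<le> real N" using real_arch_simple by blast
  then show ?thesis unfolding eventually_sequentially
    by (intro exI[of _ N] allI impI clip_id) auto
qed

lemma trunc_conv:
  fixes f :: "'a \<Rightarrow> real"
  assumes fL: "f \<in> L2 M"
  shows "(\<lambda>n. \<integral>x. (clip (real n + 1) (f x))^2 \<partial>M) \<longlonglongrightarrow> (\<integral>x. (f x)^2 \<partial>M)"
    and "(\<lambda>n. \<integral>x. (f x - clip (real n + 1) (f x))^2 \<partial>M) \<longlonglongrightarrow> 0"
proof -
  have fm[measurable]: "f \<in> borel_measurable M" and fi: "integrable M (\<lambda>x. (f x)^2)" using fL by (auto simp: L2_def)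
  have cm[measurable]: "(\<lambda>y. clip K y) \<in> borel_measurable borel" for K unfolding clip_def by measurable
  show "(\<lambda>n. \<integral>x. (clip (real n + 1) (f x))^2 \<partial>M) \<longlonglongrightarrow> (\<integral>x. (f x)^2 \<partial>M)"
  proof (rule integral_dominated_convergence[where w="\<lambda>x. (f x)^2"])
    show "(\<lambda>x. (f x)^2) \<in> borel_measurable M" by measurable
    show "(\<lambda>x. (clip (real n + 1) (f x))^2) \<in> borel_measurable M" for n by measurable
    show "integrable M (\<lambda>x. (f x)^2)" by (rule fi)
    show "AE x in M. (\<lambda>n. (clip (real n + 1) (f x))^2) \<longlonglongrightarrow> (f x)^2"
    proof (rule AE_I2)
      fix x
      have "(\<lambda>n. clip (real n + 1) (f x)) \<longlonglongrightarrow> f x" by (rule tendsto_eventually[OF clip_eventually])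
      then show "(\<lambda>n. (clip (real n + 1) (f x))^2) \<longlonglongrightarrow> (f x)^2" by (intro tendsto_intros)
    qed
    show "AE x in M. norm ((clip (real n + 1) (f x))^2) \<le> (f x)^2" for n
    proof (rule AE_I2)
      fix x
      have "\<bar>clip (real n + 1) (f x)\<bar> \<le> \<bar>f x\<bar>" by (rule clip_abs) simp
      then show "norm ((clip (real n + 1) (f x))^2) \<le> (f x)^2" by (simp add: abs_le_square_iff)
    qed
  qed
  show "(\<lambda>n. \<integral>x. (f x - clip (real n + 1) (f x))^2 \<partial>M) \<longlonglongrightarrow> 0"
  proof -
    have "(\<lambda>n. \<integral>x. (f x - clip (real n + 1) (f x))^2 \<partial>M) \<longlonglongrightarrow> (\<integral>x. 0 \<partial>M)"
    proof (rule integral_dominated_convergence[where w="\<lambda>x. (f x)^2"])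
      show "(\<lambda>x. 0::real) \<in> borel_measurable M" by measurable
      show "(\<lambda>x. (f x - clip (real n + 1) (f x))^2) \<in> borel_measurable M" for n by measurable
      show "integrable M (\<lambda>x. (f x)^2)" by (rule fi)
      show "AE x in M. (\<lambda>n. (f x - clip (real n + 1) (f x))^2) \<longlonglongrightarrow> 0"
      proof (rule AE_I2)
        fix x
        show "(\<lambda>n. (f x - clip (real n + 1) (f x))^2) \<longlonglongrightarrow> 0"
          by (rule tendsto_eventually) (use clip_eventually[of "f x"] in \<open>auto elim: eventually_mono\<close>)
      qed
      show "AE x in M. norm ((f x - clip (real n + 1) (f x))^2) \<le> (f x)^2" for n
      proof (rule AE_I2)
        fix x
        have "\<bar>f x - clip (real n + 1) (f x)\<bar> \<le> \<bar>f x\<bar>" by (rule clip_diff) simp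
        then show "norm ((f x - clip (real n + 1) (f x))^2) \<le> (f x)^2" by (simp add: abs_le_square_iff)
      qed
    qed
    then show ?thesis by simp
  qed
qed

lemma sg_contr:
  assumes P: "prob_space M" and sg: "symmetric_subMarkov_semigroup M P" and t: "t \<ge> 0"
    and gL: "g \<in> L2 M"
  shows "(\<integral>x. (P t g x)^2 \<partial>M) \<le> (\<integral>x. (g x)^2 \<partial>M)"
proof -
  define u where "u = P t g"
  have uL: "u \<in> L2 M" unfolding u_def by (rule sgD1[OF sg t gL])
  have um[measurable]: "u \<in> borel_measurable M" using uL by (simp add: L2_def)
  have cm[measurable]: "(\<lambda>y. clip K y) \<in> borel_measurable borel" for K unfolding clip_def by measurable
  have bnd: "(\<integral>x. (clip (real n + 1) (u x))^2 \<partial>M) \<le> (\<integral>x. (g x)^2 \<partial>M)" for n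
  proof -
    define K where "K = real n + 1"
    have K: "K > 0" unfolding K_def by simp
    define v where "v = (\<lambda>x. clip K (u x))"
    have vm[measurable]: "v \<in> borel_measurable M" unfolding v_def by measurable
    have vb: "AE x in M. \<bar>v x\<bar> \<le> K" unfolding v_def using K by (intro AE_I2 clip_bound) simp
    have vL: "v \<in> L2 M" by (rule bounded_L2[OF P vm vb])
    have PvL: "P t v \<in> L2 M" by (rule sgD1[OF sg t vL])
    have iv2: "integrable M (\<lambda>x. (v x)^2)" using vL by (simp add: L2_def)
    have ig2: "integrable M (\<lambda>x. (g x)^2)" using gL by (simp add: L2_def)
    have iPv2: "integrable M (\<lambda>x. (P t v x)^2)" using PvL by (simp add: L2_def)
    have iuv: "integrable M (\<lambda>x. u x * v x)" by (rule L2_prod_int[OF uL vL])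
    have igPv: "integrable M (\<lambda>x. g x * P t v x)" by (rule L2_prod_int[OF gL PvL])
    have "(\<integral>x. (v x)^2 \<partial>M) \<le> (\<integral>x. u x * v x \<partial>M)"
      by (rule integral_mono[OF iv2 iuv]) (use K in \<open>simp add: v_def clip_sq\<close>)
    also have "\<dots> = (\<integral>x. g x * P t v x \<partial>M)" unfolding u_def by (rule sgD7[OF sg t gL vL])
    also have "\<dots> \<le> (\<integral>x. ((g x)^2 + (P t v x)^2)/2 \<partial>M)"
    proof (rule integral_mono[OF igPv])
      show "integrable M (\<lambda>x. ((g x)^2 + (P t v x)^2)/2)" using ig2 iPv2 by simp
      fix x
      show "g x * P t v x \<le> ((g x)^2 + (P t v x)^2)/2"
        using sum_squares_bound[of "g x" "P t v x"] by (simp add: power2_eq_square field_simps)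
    qed
    also have "\<dots> = ((\<integral>x. (g x)^2 \<partial>M) + (\<integral>x. (P t v x)^2 \<partial>M))/2" using ig2 iPv2 by simp
    finally have c1: "(\<integral>x. (v x)^2 \<partial>M) \<le> ((\<integral>x. (g x)^2 \<partial>M) + (\<integral>x. (P t v x)^2 \<partial>M))/2" .
    have c2: "(\<integral>x. (P t v x)^2 \<partial>M) \<le> (\<integral>x. (v x)^2 \<partial>M)" by (rule sg_contr_bdd[OF P sg t vm K vb])
    from c1 c2 have "(\<integral>x. (v x)^2 \<partial>M) \<le> (\<integral>x. (g x)^2 \<partial>M)" by argo
    then show ?thesis unfolding v_def K_def by simp
  qed
  have "(\<integral>x. (u x)^2 \<partial>M) \<le> (\<integral>x. (g x)^2 \<partial>M)"
    using LIMSEQ_le_const2[OF trunc_conv(1)[OF uL]] bnd by blast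
  then show ?thesis unfolding u_def .
qed

lemma opnorm_eq:
  assumes P: "prob_space M" and sg: "symmetric_subMarkov_semigroup M P" and t: "t \<ge> 0"
  shows "opnorm_inf2 M (P t) = l2norm M (P t one)"
  unfolding opnorm_inf2_def
proof (rule cSup_eq_maximum)
  show "l2norm M (P t one) \<in> {l2norm M (P t f) |f. f \<in> borel_measurable M \<and> (AE x in M. \<bar>f x\<bar> \<le> 1)}"
    by (rule CollectI, rule exI[of _ one]) (simp add: one_def)
  fix y assume "y \<in> {l2norm M (P t f) |f. f \<in> borel_measurable M \<and> (AE x in M. \<bar>f x\<bar> \<le> 1)}"
  then obtain f where y: "y = l2norm M (P t f)" and fm: "f \<in> borel_measurable M" and fb: "AE x in M. \<bar>f x\<bar> \<le> 1"
    by blast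
  have "(\<integral>x. (P t f x)^2 \<partial>M) \<le> 1^2 * (\<integral>x. (P t one x)^2 \<partial>M)"
    by (rule sg_Linf[OF P sg t fm _ fb]) simp
  then show "y \<le> l2norm M (P t one)" unfolding y l2norm_def by simp
qed

lemma part2:
  assumes P: "prob_space M" and sg: "symmetric_subMarkov_semigroup M P"
  shows "(\<forall>f\<in>L2 M. ((\<lambda>t. l2norm M (P t f)) \<longlongrightarrow> 0) at_top)
             \<longleftrightarrow> ((\<lambda>t. opnorm_inf2 M (P t)) \<longlongrightarrow> 0) at_top"
proof -
  have ev: "\<forall>\<^sub>F t in at_top. opnorm_inf2 M (P t) = l2norm M (P t one)"
    using eventually_ge_at_top[of "0::real"] by eventually_elim (rule opnorm_eq[OF P sg])
  have eqv: "((\<lambda>t. opnorm_inf2 M (P t)) \<longlongrightarrow> 0) at_top \<longleftrightarrow> ((\<lambda>t. l2norm M (P t one)) \<longlongrightarrow> 0) at_top"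
    by (rule tendsto_cong[OF ev])
  show ?thesis
  proof
    assume "\<forall>f\<in>L2 M. ((\<lambda>t. l2norm M (P t f)) \<longlongrightarrow> 0) at_top"
    then show "((\<lambda>t. opnorm_inf2 M (P t)) \<longlongrightarrow> 0) at_top" using eqv one_L2[OF P] by blast
  next
    assume "((\<lambda>t. opnorm_inf2 M (P t)) \<longlongrightarrow> 0) at_top"
    then have l1: "((\<lambda>t. l2norm M (P t one)) \<longlongrightarrow> 0) at_top" using eqv by blast
    define N1 where "N1 t = (\<integral>x. (P t one x)^2 \<partial>M)" for t
    have N1eq: "N1 t = (l2norm M (P t one))^2" for t
      unfolding N1_def l2norm_def by (simp add: integral_nonneg_AE)
    have N1lim: "(N1 \<longlongrightarrow> 0) at_top"
      using tendsto_power[OF l1, of 2] unfolding N1eq[abs_def] by simp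
    show "\<forall>f\<in>L2 M. ((\<lambda>t. l2norm M (P t f)) \<longlongrightarrow> 0) at_top"
    proof
      fix f assume fL: "f \<in> L2 M"
      have fm[measurable]: "f \<in> borel_measurable M" using fL by (simp add: L2_def)
      have cm[measurable]: "(\<lambda>y. clip K y) \<in> borel_measurable borel" for K unfolding clip_def by measurable
      have sq: "((\<lambda>t. \<integral>x. (P t f x)^2 \<partial>M) \<longlongrightarrow> 0) at_top"
      proof (rule tendstoI)
        fix e :: real assume e: "e > 0"
        have "e/4 > 0" using e by simp
        with trunc_conv(2)[OF fL] have "\<forall>\<^sub>F n in sequentially. dist (\<integral>x. (f x - clip (real n + 1) (f x))^2 \<partial>M) 0 < e/4"
          unfolding tendsto_iff by blast
        then obtain n where n: "dist (\<integral>x. (f x - clip (real n + 1) (f x))^2 \<partial>M) 0 < e/4"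
          unfolding eventually_sequentially by blast
        define K where "K = real n + 1"
        have K: "K > 0" unfolding K_def by simp
        define fK where "fK = (\<lambda>x. clip K (f x))"
        define r where "r = (\<lambda>x. f x - clip K (f x))"
        have fKm: "fK \<in> borel_measurable M" unfolding fK_def by measurable
        have fKb: "AE x in M. \<bar>fK x\<bar> \<le> K" unfolding fK_def using K by (intro AE_I2 clip_bound) simp
        have fKL: "fK \<in> L2 M" by (rule bounded_L2[OF P fKm fKb])
        have r_eq: "r = (\<lambda>y. 1 * f y + (-1) * fK y)" unfolding r_def fK_def by auto
        have rL: "r \<in> L2 M" unfolding r_eq by (rule L2_comb[OF fL fKL])
        have f_eq: "f = (\<lambda>y. 1 * fK y + 1 * r y)" unfolding r_def fK_def by auto
        have rsmall: "(\<integral>x. (r x)^2 \<partial>M) < e/4"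
          using n unfolding r_def K_def dist_real_def by (simp add: integral_nonneg_AE)
        have "e / (4 * K^2) > 0" using e K by simp
        with N1lim have "\<forall>\<^sub>F t in at_top. dist (N1 t) 0 < e / (4 * K^2)"
          unfolding tendsto_iff by blast
        then show "\<forall>\<^sub>F t in at_top. dist (\<integral>x. (P t f x)^2 \<partial>M) 0 < e"
          using eventually_ge_at_top[of "0::real"]
        proof eventually_elim
          case (elim t)
          then have t: "t \<ge> 0" and N1s: "N1 t < e / (4 * K^2)" by (auto simp: dist_real_def N1_def)
          have PfL: "P t f \<in> L2 M" by (rule sgD1[OF sg t fL])
          have PfKL: "P t fK \<in> L2 M" by (rule sgD1[OF sg t fKL])
          have PrL: "P t r \<in> L2 M" by (rule sgD1[OF sg t rL])
          have i1: "integrable M (\<lambda>x. (P t f x)^2)" using PfL by (simp add: L2_def)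
          have i2: "integrable M (\<lambda>x. (P t fK x)^2)" using PfKL by (simp add: L2_def)
          have i3: "integrable M (\<lambda>x. (P t r x)^2)" using PrL by (simp add: L2_def)
          have lin: "AE x in M. P t f x = 1 * P t fK x + 1 * P t r x"
            using sg_lin[OF sg t fKL rL, of 1 1] unfolding f_eq[symmetric] .
          have "(\<integral>x. (P t f x)^2 \<partial>M) \<le> (\<integral>x. 2 * (P t fK x)^2 + 2 * (P t r x)^2 \<partial>M)"
          proof (rule integral_mono_AE[OF i1])
            show "integrable M (\<lambda>x. 2 * (P t fK x)^2 + 2 * (P t r x)^2)" using i2 i3 by simp
            show "AE x in M. (P t f x)^2 \<le> 2 * (P t fK x)^2 + 2 * (P t r x)^2" using lin
            proof eventually_elim
              case (elim x)
              have "(P t fK x + P t r x)^2 \<le> 2 * (P t fK x)^2 + 2 * (P t r x)^2"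
                using sum_squares_bound[of "P t fK x" "P t r x"] by (simp add: power2_eq_square algebra_simps)
              then show ?case using elim by simp
            qed
          qed
          also have "\<dots> = 2 * (\<integral>x. (P t fK x)^2 \<partial>M) + 2 * (\<integral>x. (P t r x)^2 \<partial>M)" using i2 i3 by simp
          also have "(\<integral>x. (P t fK x)^2 \<partial>M) \<le> K^2 * N1 t"
            unfolding N1_def by (rule sg_Linf[OF P sg t fKm K fKb])
          also have "(\<integral>x. (P t r x)^2 \<partial>M) \<le> (\<integral>x. (r x)^2 \<partial>M)" by (rule sg_contr[OF P sg t rL])
          finally have b: "(\<integral>x. (P t f x)^2 \<partial>M) \<le> 2 * (K^2 * N1 t) + 2 * (\<integral>x. (r x)^2 \<partial>M)"
            by simp
          have "K^2 * N1 t < K^2 * (e / (4 * K^2))" using N1s K by (intro mult_strict_left_mono) auto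
          also have "\<dots> = e/4" using K by (simp add: field_simps)
          finally have "K^2 * N1 t < e/4" .
          then have "(\<integral>x. (P t f x)^2 \<partial>M) < e" using b rsmall by argo
          moreover have "0 \<le> (\<integral>x. (P t f x)^2 \<partial>M)" by (simp add: integral_nonneg_AE)
          ultimately show ?case by (simp add: dist_real_def)
        qed
      qed
      have "((\<lambda>t. sqrt (\<integral>x. (P t f x)^2 \<partial>M)) \<longlongrightarrow> sqrt 0) at_top"
        by (rule tendsto_real_sqrt[OF sq])
      then show "((\<lambda>t. l2norm M (P t f)) \<longlongrightarrow> 0) at_top" unfolding l2norm_def by simp
    qed
  qed
qed

theorem lemma4p3:
  fixes M :: "'a measure"
  assumes "prob_space M"
  shows "(\<forall>D E. dirichlet_form M D E \<and> non_conservative M D E \<longrightarrow>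
            (irreducible_form M D E \<longleftrightarrow>
              (\<exists>\<alpha>::real \<Rightarrow> real. (\<forall>r>0. \<alpha> r > 0) \<and>
                 (\<forall>r>0. \<forall>f\<in>D. ereal (\<integral>x. (f x)^2 \<partial>M)
                     \<le> ereal (\<alpha> r * E f f) + ereal r * (linfnorm M f)^2))))
       \<and> (\<forall>P. symmetric_subMarkov_semigroup M P \<longrightarrow>
            ((\<forall>f\<in>L2 M. ((\<lambda>t. l2norm M (P t f)) \<longlongrightarrow> 0) at_top)
             \<longleftrightarrow> ((\<lambda>t. opnorm_inf2 M (P t)) \<longlongrightarrow> 0) at_top))"
proof (intro conjI allI impI)
  fix D E assume h: "dirichlet_form M D E \<and> non_conservative M D E"
  then have df: "dirichlet_form M D E" by blast
  show "irreducible_form M D E \<longleftrightarrow>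
              (\<exists>\<alpha>::real \<Rightarrow> real. (\<forall>r>0. \<alpha> r > 0) \<and>
                 (\<forall>r>0. \<forall>f\<in>D. ereal (\<integral>x. (f x)^2 \<partial>M)
                     \<le> ereal (\<alpha> r * E f f) + ereal r * (linfnorm M f)^2))"
  proof
    assume "irreducible_form M D E"
    then show "\<exists>\<alpha>::real \<Rightarrow> real. (\<forall>r>0. \<alpha> r > 0) \<and>
                 (\<forall>r>0. \<forall>f\<in>D. ereal (\<integral>x. (f x)^2 \<partial>M)
                     \<le> ereal (\<alpha> r * E f f) + ereal r * (linfnorm M f)^2)"
      by (rule part1_fwd[OF assms df])
  next
    assume "\<exists>\<alpha>::real \<Rightarrow> real. (\<forall>r>0. \<alpha> r > 0) \<and>
                 (\<forall>r>0. \<forall>f\<in>D. ereal (\<integral>x. (f x)^2 \<partial>M)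
                     \<le> ereal (\<alpha> r * E f f) + ereal r * (linfnorm M f)^2)"
    then obtain \<alpha> :: "real \<Rightarrow> real" where "\<forall>r>0. \<forall>f\<in>D. ereal (\<integral>x. (f x)^2 \<partial>M)
                     \<le> ereal (\<alpha> r * E f f) + ereal r * (linfnorm M f)^2" by blast
    then show "irreducible_form M D E" by (rule part1_back[OF assms df])
  qed
next
  fix P assume "symmetric_subMarkov_semigroup M P"
  then show "(\<forall>f\<in>L2 M. ((\<lambda>t. l2norm M (P t f)) \<longlongrightarrow> 0) at_top)
             \<longleftrightarrow> ((\<lambda>t. opnorm_inf2 M (P t)) \<longlongrightarrow> 0) at_top"
    by (rule part2[OF assms])
qed

end
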